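(* Let $f: \mathbb{R}^n \to \mathbb{R}^n$ be topical, $\lambda \in \mathbb{R}$ and $k \ge 1$. There is a function $H^k: \mathbb{R}\cup\{-\infty\} \to \mathbb{R}\cup\{-\infty\}$ such that for every vertex $X$ of $\mathcal{G}^k(f)$ lying in a strongly connected component of $\mathcal{G}^k(f)$ — more precisely, for every strongly connected component $\mathcal{X}$ of $\mathcal{G}^k(f)$ — for all $i,j \in \bigcup_{X\in\mathcal{X}}\sigma(X)$ and all $x \in \mathbb{R}^n$: if $f(x) \le \lambda + x$ and $x \ge 0$, then $x_j \le H^k(x_i)$.
   Context: $f$ is topical if $f(x+h) = f(x)+h$ for all $h\in\mathbb{R}$ (scalar added to each coordinate) and $x\le y$ componentwise implies $f(x)\le f(y)$. $e_J$ is the characteristic vector of $J\subseteq\{1,\dots,n\}$. Aggregated graphs: $\mathcal{G}^1(f)$ is the directed graph on $\{1,\dots,n\}$ with an edge $i\to j$ iff $\lim_{u\to\infty} f_i(u e_{\{j\}}) = \infty$, with $\sigma(i) = \{i\}$. For $k\ge2$, the vertices of $\mathcal{G}^k(f)$ are the strongly connected components of $\mathcal{G}^{k-1}(f)$, a component $X$ being associated with $\sigma(X) = \bigcup_{Y\in X}\sigma(Y)$; there is an edge $I\to J$ in $\mathcal{G}^k(f)$ iff there exists $i\in\sigma(I)$ with $\lim_{u\to\infty} f_i(u e_{\sigma(J)}) = \infty$. A strongly connected component is an equivalence class under: $X$ communicates with $Y$ iff $X=Y$ or there are directed paths both from $X$ to $Y$ and from $Y$ to $X$. *)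

theory Defs
  imports "HOL-Analysis.Analysis"
begin

definition topical :: "(real^'n \<Rightarrow> real^'n) \<Rightarrow> bool" where
  "topical f \<longleftrightarrow>
     (\<forall>x h. f (x + (\<chi> i. h)) = f x + (\<chi> i. h)) \<and>
     (\<forall>x y. (\<forall>i. x $ i \<le> y $ i) \<longrightarrow> (\<forall>i. f x $ i \<le> f y $ i))"

definition charvec :: "'n set \<Rightarrow> real^'n" where
  "charvec J = (\<chi> j. if j \<in> J then 1 else 0)"

text \<open>Vertices of the aggregated graphs are represented by their sigma-sets.\<close>
definition agg_edge :: "(real^'n \<Rightarrow> real^'n) \<Rightarrow> 'n set \<Rightarrow> 'n set \<Rightarrow> bool" where
  "agg_edge f I J \<longleftrightarrow>
     (\<exists>i\<in>I. filterlim (\<lambda>u. f (u *\<^sub>R charvec J) $ i) at_top at_top)"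

definition agg_edges :: "(real^'n \<Rightarrow> real^'n) \<Rightarrow> 'n set set \<Rightarrow> ('n set \<times> 'n set) set" where
  "agg_edges f V = {(I, J). I \<in> V \<and> J \<in> V \<and> agg_edge f I J}"

definition communicates :: "'a set \<Rightarrow> ('a \<times> 'a) set \<Rightarrow> ('a \<times> 'a) set" where
  "communicates V E = {(X, Y). X \<in> V \<and> Y \<in> V \<and>
      (X = Y \<or> ((X, Y) \<in> E\<^sup>+ \<and> (Y, X) \<in> E\<^sup>+))}"

definition agg_sccs :: "(real^'n \<Rightarrow> real^'n) \<Rightarrow> 'n set set \<Rightarrow> 'n set set set" where
  "agg_sccs f V = V // communicates V (agg_edges f V)"

text \<open>agg_V0 f m is the vertex set (as sigma-sets) of G^(m+1)(f).\<close>
primrec agg_V0 :: "(real^'n \<Rightarrow> real^'n) \<Rightarrow> nat \<Rightarrow> 'n set set" where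
  "agg_V0 f 0 = {{i} | i. True}"
| "agg_V0 f (Suc m) = Union ` agg_sccs f (agg_V0 f m)"

definition agg_V :: "(real^'n \<Rightarrow> real^'n) \<Rightarrow> nat \<Rightarrow> 'n set set" where
  "agg_V f k = agg_V0 f (k - 1)"

end

theory Submission
  imports Defs
begin

definition adm :: "(real^'n \<Rightarrow> real^'n) \<Rightarrow> real \<Rightarrow> real^'n \<Rightarrow> bool" where
  "adm f lam x \<longleftrightarrow> (\<forall>l. f x $ l \<le> lam + x $ l) \<and> (\<forall>l. 0 \<le> x $ l)"

definition bnd :: "(real^'n \<Rightarrow> real^'n) \<Rightarrow> real \<Rightarrow> 'n \<Rightarrow> 'n \<Rightarrow> bool" where
  "bnd f lam i j \<longleftrightarrow> (\<forall>t. \<exists>c. \<forall>x. adm f lam x \<and> x $ i \<le> t \<longrightarrow> x $ j \<le> c)"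

lemma fin_combine:
  assumes "finite S" "\<forall>s\<in>S. \<exists>c::real. \<forall>x. P s x \<longrightarrow> g s x \<le> c"
  shows "\<exists>c. \<forall>s\<in>S. \<forall>x. P s x \<longrightarrow> g s x \<le> c"
proof -
  from assms(2) obtain cs where cs: "\<forall>s\<in>S. \<forall>x. P s x \<longrightarrow> g s x \<le> cs s"
    by metis
  have "\<forall>s\<in>S. cs s \<le> Max (insert 0 (cs ` S))"
    using assms(1) by auto
  then have "\<forall>s\<in>S. \<forall>x. P s x \<longrightarrow> g s x \<le> Max (insert 0 (cs ` S))"
    using cs by fastforce
  then show ?thesis by blast
qed

lemma bnd_refl: "bnd f lam i i"
  unfolding bnd_def by blast

lemma bnd_trans: assumes "bnd f lam i l" "bnd f lam l j" shows "bnd f lam i j"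
  unfolding bnd_def
proof
  fix t
  from assms(1) obtain c1 where c1: "\<forall>x. adm f lam x \<and> x $ i \<le> t \<longrightarrow> x $ l \<le> c1"
    unfolding bnd_def by blast
  from assms(2) obtain c2 where c2: "\<forall>x. adm f lam x \<and> x $ l \<le> c1 \<longrightarrow> x $ j \<le> c2"
    unfolding bnd_def by blast
  show "\<exists>c. \<forall>x. adm f lam x \<and> x $ i \<le> t \<longrightarrow> x $ j \<le> c"
    using c1 c2 by blast
qed

lemma edge_bnd:
  assumes top: "topical f" and e: "agg_edge f I J"
    and intJ: "\<forall>l\<in>J. \<forall>j\<in>J. bnd f lam l j"
  shows "\<exists>i\<in>I. \<forall>j\<in>J. bnd f lam i j"
proof -
  from e obtain i where iI: "i \<in> I"
    and lim: "filterlim (\<lambda>u. f (u *\<^sub>R charvec J) $ i) at_top at_top"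
    unfolding agg_edge_def by blast
  have mono: "\<And>x y. (\<forall>l. x $ l \<le> y $ l) \<Longrightarrow> f x $ i \<le> f y $ i"
    using top unfolding topical_def by blast
  have "\<forall>j\<in>J. bnd f lam i j"
  proof
    fix j assume jJ: "j \<in> J"
    show "bnd f lam i j" unfolding bnd_def
    proof
      fix t
      have "eventually (\<lambda>u. f (u *\<^sub>R charvec J) $ i > lam + t) at_top"
        using lim unfolding filterlim_at_top_dense by blast
      then obtain U where U: "\<And>u. u \<ge> U \<Longrightarrow> f (u *\<^sub>R charvec J) $ i > lam + t"
        unfolding eventually_at_top_linorder by blast
      have "\<forall>l\<in>J. \<exists>c. \<forall>x. adm f lam x \<and> x $ l \<le> U \<longrightarrow> x $ j \<le> c"
        using intJ jJ unfolding bnd_def by blast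
      then obtain c where c: "\<forall>l\<in>J. \<forall>x. adm f lam x \<and> x $ l \<le> U \<longrightarrow> x $ j \<le> c"
        using fin_combine[of J "\<lambda>l x. adm f lam x \<and> x $ l \<le> U" "\<lambda>l x. x $ j"] by auto
      have "\<forall>x. adm f lam x \<and> x $ i \<le> t \<longrightarrow> x $ j \<le> c"
      proof (intro allI impI)
        fix x assume xa: "adm f lam x \<and> x $ i \<le> t"
        define m where "m = Min ((\<lambda>l. x $ l) ` J)"
        have finJ: "finite J" by simp
        have "m \<in> (\<lambda>l. x $ l) ` J" unfolding m_def using jJ finJ
          by (intro Min_in) auto
        then obtain l0 where l0: "l0 \<in> J" "x $ l0 = m" by auto
        have mle: "\<And>l. l \<in> J \<Longrightarrow> m \<le> x $ l" unfolding m_def using finJ by auto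
        have "m \<le> U"
        proof (rule ccontr)
          assume "\<not> m \<le> U"
          then have "f (m *\<^sub>R charvec J) $ i > lam + t" using U by auto
          moreover have "\<forall>l. (m *\<^sub>R charvec J) $ l \<le> x $ l"
            using mle xa unfolding charvec_def adm_def by auto
          then have "f (m *\<^sub>R charvec J) $ i \<le> f x $ i" by (rule mono)
          moreover have "f x $ i \<le> lam + x $ i" using xa unfolding adm_def by auto
          ultimately show False using xa by linarith
        qed
        then show "x $ j \<le> c" using c l0 xa by auto
      qed
      then show "\<exists>c. \<forall>x. adm f lam x \<and> x $ i \<le> t \<longrightarrow> x $ j \<le> c" by blast
    qed
  qed
  then show ?thesis using iI by blast
qed

lemma path_bnd:
  assumes top: "topical f"
    and intV: "\<forall>Y\<in>V. \<forall>i\<in>Y. \<forall>j\<in>Y. bnd f lam i j"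
    and p: "(Y1, Y2) \<in> (agg_edges f V)\<^sup>*" and Y1: "Y1 \<in> V"
  shows "\<forall>i\<in>Y1. \<forall>j\<in>Y2. bnd f lam i j"
  using p
proof (induction rule: rtrancl_induct)
  case base
  then show ?case using intV Y1 by blast
next
  case (step Z W)
  then have e: "agg_edge f Z W" and WV: "W \<in> V" unfolding agg_edges_def by auto
  obtain z where "z \<in> Z" "\<forall>j\<in>W. bnd f lam z j"
    using edge_bnd[OF top e] intV WV by blast
  then show ?case using step.IH bnd_trans by blast
qed

lemma scc_bnd:
  assumes top: "topical f"
    and intV: "\<forall>Y\<in>V. \<forall>i\<in>Y. \<forall>j\<in>Y. bnd f lam i j"
    and X: "\<X> \<in> agg_sccs f V"
  shows "\<forall>i\<in>\<Union>\<X>. \<forall>j\<in>\<Union>\<X>. bnd f lam i j"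
proof (intro ballI)
  fix i j assume i: "i \<in> \<Union>\<X>" and j: "j \<in> \<Union>\<X>"
  from X obtain X0 where X0: "X0 \<in> V" "\<X> = communicates V (agg_edges f V) `` {X0}"
    unfolding agg_sccs_def quotient_def by blast
  from i obtain Y1 where Y1: "Y1 \<in> \<X>" "i \<in> Y1" by blast
  from j obtain Y2 where Y2: "Y2 \<in> \<X>" "j \<in> Y2" by blast
  have c1: "(X0, Y1) \<in> communicates V (agg_edges f V)" using Y1 X0 by auto
  have c2: "(X0, Y2) \<in> communicates V (agg_edges f V)" using Y2 X0 by auto
  have "(Y1, X0) \<in> (agg_edges f V)\<^sup>*" using c1 unfolding communicates_def
    by (auto intro: trancl_into_rtrancl)
  moreover have "(X0, Y2) \<in> (agg_edges f V)\<^sup>*" using c2 unfolding communicates_def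
    by (auto intro: trancl_into_rtrancl)
  ultimately have "(Y1, Y2) \<in> (agg_edges f V)\<^sup>*" by auto
  moreover have "Y1 \<in> V" using c1 unfolding communicates_def by auto
  ultimately show "bnd f lam i j" using path_bnd[OF top intV] Y1 Y2 by blast
qed

lemma level_bnd:
  assumes top: "topical f"
  shows "\<forall>Y\<in>agg_V0 f m. \<forall>i\<in>Y. \<forall>j\<in>Y. bnd f lam i j"
proof (induction m)
  case 0
  then show ?case using bnd_refl by auto
next
  case (Suc m)
  show ?case using scc_bnd[OF top Suc] by auto
qed

theorem lemma3p4:
  fixes f :: "real^'n \<Rightarrow> real^'n" and lam :: real and k :: nat
  assumes "topical f" and "k \<ge> 1"
  shows "\<exists>H :: ereal \<Rightarrow> ereal. (\<forall>y. H y \<noteq> \<infinity>) \<and>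
    (\<forall>\<X> \<in> agg_sccs f (agg_V f k). \<forall>i \<in> \<Union>\<X>. \<forall>j \<in> \<Union>\<X>. \<forall>x :: real^'n.
        (\<forall>l. f x $ l \<le> lam + x $ l) \<and> (\<forall>l. 0 \<le> x $ l)
        \<longrightarrow> ereal (x $ j) \<le> H (ereal (x $ i)))"
proof -
  define S where "S = {(i, j). \<exists>\<X> \<in> agg_sccs f (agg_V f k). i \<in> \<Union>\<X> \<and> j \<in> \<Union>\<X>}"
  have bS: "\<forall>p\<in>S. bnd f lam (fst p) (snd p)"
    using scc_bnd[OF assms(1) level_bnd[OF assms(1)]] unfolding S_def agg_V_def by auto
  define Q where "Q = (\<lambda>t c. \<forall>p\<in>S. \<forall>x. adm f lam x \<and> x $ fst p \<le> t \<longrightarrow> x $ snd p \<le> c)"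
  have Qex: "\<exists>c. Q t c" for t
  proof -
    have "finite S" by simp
    moreover have "\<forall>p\<in>S. \<exists>c. \<forall>x. adm f lam x \<and> x $ fst p \<le> t \<longrightarrow> x $ snd p \<le> c"
      using bS unfolding bnd_def by blast
    ultimately show ?thesis unfolding Q_def
      using fin_combine[of S "\<lambda>p x. adm f lam x \<and> x $ fst p \<le> t" "\<lambda>p x. x $ snd p"] by auto
  qed
  define H where "H = (\<lambda>y. ereal (SOME c. Q (real_of_ereal y) c))"
  have "\<forall>y. H y \<noteq> \<infinity>" unfolding H_def by simp
  moreover have "\<forall>\<X> \<in> agg_sccs f (agg_V f k). \<forall>i \<in> \<Union>\<X>. \<forall>j \<in> \<Union>\<X>. \<forall>x :: real^'n.
        (\<forall>l. f x $ l \<le> lam + x $ l) \<and> (\<forall>l. 0 \<le> x $ l)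
        \<longrightarrow> ereal (x $ j) \<le> H (ereal (x $ i))"
  proof (intro ballI allI impI)
    fix \<X> i j x
    assume X: "\<X> \<in> agg_sccs f (agg_V f k)" and i: "i \<in> \<Union>\<X>" and j: "j \<in> \<Union>\<X>"
      and xa: "(\<forall>l. f x $ l \<le> lam + x $ l) \<and> (\<forall>l. 0 \<le> x $ l)"
    have p: "(i, j) \<in> S" unfolding S_def using X i j by blast
    have q: "Q (x $ i) (SOME c. Q (x $ i) c)" using Qex by (rule someI_ex)
    have "x $ j \<le> (SOME c. Q (x $ i) c)"
      using q p xa unfolding Q_def adm_def by fastforce
    then show "ereal (x $ j) \<le> H (ereal (x $ i))" unfolding H_def by simp
  qed
  ultimately show ?thesis by blast
qed

end
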